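(* Let $G=(V,E)$ be a graph with no isolated vertices and $m\ge1$ edges. Then the linear programs $\mathrm{LP}_{\mathrm{complete}}$ and $\mathrm{LP}_{\mathrm{sparse}}$ (defined in the context) have the same set of optimal solutions; in particular every optimal solution of $\mathrm{LP}_{\mathrm{sparse}}$ is feasible for $\mathrm{LP}_{\mathrm{complete}}$, i.e. is a pseudo-metric on $V$ with values in $[0,1]$, and the two programs have the same optimal objective value.
   Context: $G=(V,E)$ is an undirected simple graph, $V=\{1,\dots,n\}$, $m=|E|$, adjacency matrix $A$, degrees $d_i$, modularity matrix $B_{i,j}=A_{i,j}-\frac{d_id_j}{2m}$. Variables $d_{i,j}$ satisfy $d_{i,j}=d_{j,i}$, $d_{i,i}=0$. $N(i)$ is the neighbor set of $i$ and $N(i,j)=(N(i)\cup N(j))\setminus\{i,j\}$. A pseudo-metric is a function $d$ on $V\times V$ with $d(i,j)\ge0$, $d(i,i)=0$, $d(i,j)=d(j,i)$ and $d(i,j)\le d(i,k)+d(k,j)$. $\mathrm{LP}_{\mathrm{complete}}$: maximize $\frac{1}{2m}\sum_{i,j}B_{i,j}(1-d_{i,j})$ (sum over all ordered pairs) subject to the triangle inequalities $d_{i,j}+d_{j,k}\ge d_{i,k}$, $d_{i,j}+d_{i,k}\ge d_{j,k}$, $d_{j,k}+d_{i,k}\ge d_{i,j}$ for all $i<j<k$, and $d_{i,j}\in[0,1]$ for all $i\ne j$. $\mathrm{LP}_{\mathrm{sparse}}$: maximize $-\frac{1}{2m}\sum_{i,j}B_{i,j}d_{i,j}$ subject to $d_{i,k}+d_{k,j}\ge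 d_{i,j}$ for every pair $i\ne j$ and every $k\in N(i,j)$, and $d_{i,j}\in[0,1]$ for all $i\ne j$. (Since $\sum_{i,j}B_{i,j}=0$, the two objectives coincide on every vector $d$.) *)

theory Defs
  imports Main "HOL-Analysis.Analysis"
begin

definition simple_graph :: "nat \<Rightarrow> (nat \<Rightarrow> nat \<Rightarrow> bool) \<Rightarrow> bool" where
  "simple_graph n adj \<longleftrightarrow>
     (\<forall>i j. adj i j \<longrightarrow> i \<in> {1..n} \<and> j \<in> {1..n}) \<and>
     (\<forall>i j. adj i j \<longleftrightarrow> adj j i) \<and> (\<forall>i. \<not> adj i i)"

definition Amat :: "(nat \<Rightarrow> nat \<Rightarrow> bool) \<Rightarrow> nat \<Rightarrow> nat \<Rightarrow> real" where
  "Amat adj i j = (if adj i j then 1 else 0)"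

definition nbrs :: "nat \<Rightarrow> (nat \<Rightarrow> nat \<Rightarrow> bool) \<Rightarrow> nat \<Rightarrow> nat set" where
  "nbrs n adj i = {j \<in> {1..n}. adj i j}"

definition deg :: "nat \<Rightarrow> (nat \<Rightarrow> nat \<Rightarrow> bool) \<Rightarrow> nat \<Rightarrow> real" where
  "deg n adj i = real (card (nbrs n adj i))"

definition num_edges :: "nat \<Rightarrow> (nat \<Rightarrow> nat \<Rightarrow> bool) \<Rightarrow> nat" where
  "num_edges n adj = card {(i, j). i \<in> {1..n} \<and> j \<in> {1..n} \<and> i < j \<and> adj i j}"

definition Bmat :: "nat \<Rightarrow> (nat \<Rightarrow> nat \<Rightarrow> bool) \<Rightarrow> nat \<Rightarrow> nat \<Rightarrow> real" where
  "Bmat n adj i j = Amat adj i j - deg n adj i * deg n adj j / (2 * real (num_edges n adj))"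

definition nbrs2 :: "nat \<Rightarrow> (nat \<Rightarrow> nat \<Rightarrow> bool) \<Rightarrow> nat \<Rightarrow> nat \<Rightarrow> nat set" where
  "nbrs2 n adj i j = (nbrs n adj i \<union> nbrs n adj j) - {i, j}"

text \<open>Variable vectors: d :: nat => nat => real, with d i j = d j i, d i i = 0,
  and (to avoid junk coordinates) d i j = 0 whenever i or j lies outside V.\<close>
definition is_var :: "nat \<Rightarrow> (nat \<Rightarrow> nat \<Rightarrow> real) \<Rightarrow> bool" where
  "is_var n d \<longleftrightarrow> (\<forall>i j. d i j = d j i) \<and> (\<forall>i. d i i = 0) \<and>
     (\<forall>i j. i \<notin> {1..n} \<or> j \<notin> {1..n} \<longrightarrow> d i j = 0)"

definition obj_complete :: "nat \<Rightarrow> (nat \<Rightarrow> nat \<Rightarrow> bool) \<Rightarrow> (nat \<Rightarrow> nat \<Rightarrow> real) \<Rightarrow> real" where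
  "obj_complete n adj d =
     (1 / (2 * real (num_edges n adj))) *
       (\<Sum>i\<in>{1..n}. \<Sum>j\<in>{1..n}. Bmat n adj i j * (1 - d i j))"

definition obj_sparse :: "nat \<Rightarrow> (nat \<Rightarrow> nat \<Rightarrow> bool) \<Rightarrow> (nat \<Rightarrow> nat \<Rightarrow> real) \<Rightarrow> real" where
  "obj_sparse n adj d =
     - (1 / (2 * real (num_edges n adj))) *
       (\<Sum>i\<in>{1..n}. \<Sum>j\<in>{1..n}. Bmat n adj i j * d i j)"

definition feasible_complete :: "nat \<Rightarrow> (nat \<Rightarrow> nat \<Rightarrow> real) \<Rightarrow> bool" where
  "feasible_complete n d \<longleftrightarrow> is_var n d \<and>
     (\<forall>i\<in>{1..n}. \<forall>j\<in>{1..n}. \<forall>k\<in>{1..n}. i < j \<and> j < k \<longrightarrow>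
        d i j + d j k \<ge> d i k \<and> d i j + d i k \<ge> d j k \<and> d j k + d i k \<ge> d i j) \<and>
     (\<forall>i\<in>{1..n}. \<forall>j\<in>{1..n}. i \<noteq> j \<longrightarrow> 0 \<le> d i j \<and> d i j \<le> 1)"

definition feasible_sparse :: "nat \<Rightarrow> (nat \<Rightarrow> nat \<Rightarrow> bool) \<Rightarrow> (nat \<Rightarrow> nat \<Rightarrow> real) \<Rightarrow> bool" where
  "feasible_sparse n adj d \<longleftrightarrow> is_var n d \<and>
     (\<forall>i\<in>{1..n}. \<forall>j\<in>{1..n}. i \<noteq> j \<longrightarrow>
        (\<forall>k\<in>nbrs2 n adj i j. d i k + d k j \<ge> d i j)) \<and>
     (\<forall>i\<in>{1..n}. \<forall>j\<in>{1..n}. i \<noteq> j \<longrightarrow> 0 \<le> d i j \<and> d i j \<le> 1)"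

definition optimal_complete :: "nat \<Rightarrow> (nat \<Rightarrow> nat \<Rightarrow> bool) \<Rightarrow> (nat \<Rightarrow> nat \<Rightarrow> real) \<Rightarrow> bool" where
  "optimal_complete n adj d \<longleftrightarrow> feasible_complete n d \<and>
     (\<forall>d'. feasible_complete n d' \<longrightarrow> obj_complete n adj d' \<le> obj_complete n adj d)"

definition optimal_sparse :: "nat \<Rightarrow> (nat \<Rightarrow> nat \<Rightarrow> bool) \<Rightarrow> (nat \<Rightarrow> nat \<Rightarrow> real) \<Rightarrow> bool" where
  "optimal_sparse n adj d \<longleftrightarrow> feasible_sparse n adj d \<and>
     (\<forall>d'. feasible_sparse n adj d' \<longrightarrow> obj_sparse n adj d' \<le> obj_sparse n adj d)"

definition pseudo_metric_on :: "nat set \<Rightarrow> (nat \<Rightarrow> nat \<Rightarrow> real) \<Rightarrow> bool" where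
  "pseudo_metric_on V d \<longleftrightarrow>
     (\<forall>i\<in>V. \<forall>j\<in>V. 0 \<le> d i j \<and> d i j = d j i) \<and> (\<forall>i\<in>V. d i i = 0) \<and>
     (\<forall>i\<in>V. \<forall>j\<in>V. \<forall>k\<in>V. d i j \<le> d i k + d k j)"

end

theory Submission imports Defs begin

inductive walk :: "(nat\<Rightarrow>nat\<Rightarrow>bool) \<Rightarrow> (nat\<Rightarrow>nat\<Rightarrow>real) \<Rightarrow> nat \<Rightarrow> nat \<Rightarrow> real \<Rightarrow> bool"
  for adj d where
  wnil: "walk adj d i i 0"
| wcons: "adj i k \<Longrightarrow> walk adj d k j w \<Longrightarrow> walk adj d i j (d i k + w)"

lemma walk_nonneg: "walk adj d i j w \<Longrightarrow> (\<forall>a b. 0 \<le> d a b) \<Longrightarrow> 0 \<le> w"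
  by (induction rule: walk.induct) auto

lemma walk_snoc: "walk adj d i k w \<Longrightarrow> adj k j \<Longrightarrow> walk adj d i j (w + d k j)"
proof (induction rule: walk.induct)
  case (wnil i)
  then show ?case using walk.wcons[of adj i j d j 0] walk.wnil[of adj d j] by simp
next
  case (wcons i k j' w)
  then show ?case by (metis add.assoc walk.wcons)
qed

lemma walk_rev: "walk adj d i j w \<Longrightarrow> (\<forall>a b. adj a b = adj b a) \<Longrightarrow> (\<forall>a b. d a b = d b a) \<Longrightarrow> walk adj d j i w"
proof (induction rule: walk.induct)
  case (wnil i)
  then show ?case by (simp add: walk.wnil)
next
  case (wcons i k j w)
  then have "walk adj d j i (w + d k i)" by (metis walk_snoc)
  then show ?case using wcons by (simp add: add.commute)
qed

lemma walk_append: "walk adj d i k a \<Longrightarrow> walk adj d k j b \<Longrightarrow> walk adj d i j (a + b)"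
proof (induction arbitrary: b rule: walk.induct)
  case (wnil i)
  then show ?case by simp
next
  case (wcons i k' k w)
  then show ?case by (metis add.assoc walk.wcons)
qed

lemma var_nonneg:
  assumes "feasible_sparse n adj d" shows "0 \<le> d a b"
  using assms unfolding feasible_sparse_def is_var_def
  by (metis order_refl)

lemma walk_bound:
  assumes g: "simple_graph n adj" and f: "feasible_sparse n adj d"
  shows "walk adj d i j w \<Longrightarrow> d i j \<le> w"
proof (induction rule: walk.induct)
  case (wnil i)
  then show ?case using f by (simp add: feasible_sparse_def is_var_def)
next
  case (wcons i k j w)
  have nn: "0 \<le> d a b" for a b using var_nonneg[OF f] .
  have w0: "0 \<le> w" using walk_nonneg[OF wcons(2)] nn by blast
  show ?case
  proof (cases "i = j \<or> k = j \<or> j \<notin> {1..n}")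
    case True
    then show ?thesis using f nn[of i k] w0
      by (auto simp: feasible_sparse_def is_var_def)
  next
    case False
    have iV: "i \<in> {1..n}" "k \<in> {1..n}" "k \<noteq> i" using g wcons(1) unfolding simple_graph_def by metis+
    have "k \<in> nbrs2 n adj i j" using False iV wcons(1) by (auto simp: nbrs2_def nbrs_def)
    then have "d i j \<le> d i k + d k j" using f False iV unfolding feasible_sparse_def by blast
    then show ?thesis using wcons(3) by simp
  qed
qed

definition cl :: "(nat\<Rightarrow>nat\<Rightarrow>bool) \<Rightarrow> (nat\<Rightarrow>nat\<Rightarrow>real) \<Rightarrow> nat \<Rightarrow> nat \<Rightarrow> real" where
  "cl adj d i j = Inf (insert 1 {w. walk adj d i j w})"

context
  fixes adj :: "nat\<Rightarrow>nat\<Rightarrow>bool" and d :: "nat\<Rightarrow>nat\<Rightarrow>real"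
  assumes nn: "\<forall>a b. 0 \<le> d a b"
begin

lemma wnn: "walk adj d i j w \<Longrightarrow> 0 \<le> w"
  using walk_nonneg nn by blast

lemma bdd: "bdd_below (insert 1 {w. walk adj d i j w})"
  by (rule bdd_belowI[of _ 0]) (auto intro: wnn)

lemma cl_ge0: "0 \<le> cl adj d i j"
  unfolding cl_def by (rule cInf_greatest) (auto intro: wnn)

lemma cl_le1: "cl adj d i j \<le> 1"
  unfolding cl_def by (rule cInf_lower[OF _ bdd]) auto

lemma cl_le_walk: "walk adj d i j w \<Longrightarrow> cl adj d i j \<le> w"
  unfolding cl_def by (rule cInf_lower[OF _ bdd]) auto

lemma cl_refl: "cl adj d i i = 0"
  using cl_le_walk[OF walk.wnil[of adj d i]] cl_ge0[of i i] by simp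

lemma cl_sym: "\<forall>a b. adj a b = adj b a \<Longrightarrow> \<forall>a b. d a b = d b a \<Longrightarrow> cl adj d i j = cl adj d j i"
proof -
  assume a: "\<forall>a b. adj a b = adj b a" "\<forall>a b. d a b = d b a"
  have "{w. walk adj d i j w} = {w. walk adj d j i w}" using walk_rev a by blast
  then show ?thesis unfolding cl_def by simp
qed

lemma cl_tri: "cl adj d i j \<le> cl adj d i k + cl adj d k j"
proof -
  have *: "cl adj d i j \<le> x + y" if x: "x \<in> insert 1 {w. walk adj d i k w}" and y: "y \<in> insert 1 {w. walk adj d k j w}" for x y
  proof -
    have x0: "0 \<le> x" "0 \<le> y" using x y by (auto intro: wnn)
    show ?thesis
    proof (cases "x = 1 \<or> y = 1")
      case True then show ?thesis using cl_le1[of i j] x0 by auto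
    next
      case False
      then have "walk adj d i j (x + y)" using x y walk_append by auto
      then show ?thesis by (rule cl_le_walk)
    qed
  qed
  have "cl adj d i j - x \<le> cl adj d k j" if x: "x \<in> insert 1 {w. walk adj d i k w}" for x
  proof -
    have "cl adj d i j - x \<le> Inf (insert 1 {w. walk adj d k j w})"
      by (rule cInf_greatest) (use * x in force)+
    then show ?thesis by (simp add: cl_def)
  qed
  then have h: "cl adj d i j - cl adj d k j \<le> x" if "x \<in> insert 1 {w. walk adj d i k w}" for x
    using that by force
  have "cl adj d i j - cl adj d k j \<le> Inf (insert 1 {w. walk adj d i k w})"
    by (rule cInf_greatest) (use h in blast)+
  then have "cl adj d i j - cl adj d k j \<le> cl adj d i k" by (simp add: cl_def)
  then show ?thesis by simp
qed

end


definition Dc :: "nat \<Rightarrow> (nat\<Rightarrow>nat\<Rightarrow>bool) \<Rightarrow> (nat\<Rightarrow>nat\<Rightarrow>real) \<Rightarrow> nat \<Rightarrow> nat \<Rightarrow> real" where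
  "Dc n adj d i j = (if i \<in> {1..n} \<and> j \<in> {1..n} then cl adj d i j else 0)"

lemma pm_feas:
  assumes "pseudo_metric_on {1..n} D" "is_var n D" "\<forall>i\<in>{1..n}. \<forall>j\<in>{1..n}. D i j \<le> 1"
  shows "feasible_complete n D"
  using assms unfolding feasible_complete_def pseudo_metric_on_def by metis

lemma fc_pm:
  assumes f: "feasible_complete n d"
  shows "pseudo_metric_on {1..n} d"
proof -
  have v: "is_var n d" using f by (simp add: feasible_complete_def)
  have sym: "d a b = d b a" for a b using v by (simp add: is_var_def)
  have z: "d a a = 0" for a using v by (simp add: is_var_def)
  have nn: "0 \<le> d a b" for a b
    using f unfolding feasible_complete_def is_var_def by (metis order_refl)
  have t3: "d a b + d b c \<ge> d a c \<and> d a b + d a c \<ge> d b c \<and> d b c + d a c \<ge> d a b"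
    if "a \<in> {1..n}" "b \<in> {1..n}" "c \<in> {1..n}" "a < b" "b < c" for a b c
    using f that unfolding feasible_complete_def by blast
  have tri: "d i j \<le> d i k + d k j" if V: "i \<in> {1..n}" "j \<in> {1..n}" "k \<in> {1..n}" for i j k
  proof -
    have S: "d j i = d i j" "d k j = d j k" "d k i = d i k" using sym by auto
    consider "i = j" | "i = k" | "j = k" | "i < j" "j < k" | "i < k" "k < j" | "j < i" "i < k"
      | "j < k" "k < i" | "k < i" "i < j" | "k < j" "j < i"
      by linarith
    then show ?thesis
    proof cases
      case 1 then show ?thesis using z nn by (simp add: add_nonneg_nonneg)
    next
      case 2 then show ?thesis using z by simp
    next
      case 3 then show ?thesis using z by simp
    next
      case 4 then show ?thesis using t3[of i j k] V S by linarith
    next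
      case 5 then show ?thesis using t3[of i k j] V S by linarith
    next
      case 6 then show ?thesis using t3[of j i k] V S by linarith
    next
      case 7 then show ?thesis using t3[of j k i] V S by linarith
    next
      case 8 then show ?thesis using t3[of k i j] V S by linarith
    next
      case 9 then show ?thesis using t3[of k j i] V S by linarith
    qed
  qed
  show ?thesis unfolding pseudo_metric_on_def using tri z nn sym by blast
qed

lemma fc_fs:
  assumes f: "feasible_complete n d"
  shows "feasible_sparse n adj d"
proof -
  have pm: "pseudo_metric_on {1..n} d" by (rule fc_pm[OF f])
  have "d i j \<le> d i k + d k j" if "i \<in> {1..n}" "j \<in> {1..n}" "k \<in> nbrs2 n adj i j" for i j k
    using pm that unfolding pseudo_metric_on_def nbrs2_def nbrs_def by blast
  then show ?thesis using f unfolding feasible_complete_def feasible_sparse_def by auto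
qed

lemma key_closure:
  assumes g: "simple_graph n adj" and f: "feasible_sparse n adj d"
  defines "D \<equiv> Dc n adj d"
  shows "feasible_complete n D \<and> pseudo_metric_on {1..n} D \<and> is_var n D \<and>
    (\<forall>i j. adj i j \<longrightarrow> D i j = d i j) \<and> (\<forall>i\<in>{1..n}. \<forall>j\<in>{1..n}. d i j \<le> D i j)"
proof -
  have nn: "\<forall>a b. 0 \<le> d a b" using var_nonneg[OF f] by blast
  have adjs: "\<forall>a b. adj a b = adj b a" using g by (simp add: simple_graph_def)
  have ds: "\<forall>a b. d a b = d b a" using f by (simp add: feasible_sparse_def is_var_def)
  have pm: "pseudo_metric_on {1..n} D"
    unfolding pseudo_metric_on_def D_def Dc_def
    using cl_ge0[OF nn] cl_refl[OF nn] cl_sym[OF nn adjs ds] cl_tri[OF nn]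
    by (simp (no_asm)) (metis)
  have var: "is_var n D"
    unfolding is_var_def D_def Dc_def
    using cl_refl[OF nn] cl_sym[OF nn adjs ds] by auto
  have le1: "\<forall>i\<in>{1..n}. \<forall>j\<in>{1..n}. D i j \<le> 1"
    unfolding D_def Dc_def using cl_le1[OF nn] by auto
  have ge: "\<forall>i\<in>{1..n}. \<forall>j\<in>{1..n}. d i j \<le> D i j"
  proof (intro ballI)
    fix i j assume V: "i \<in> {1..n}" "j \<in> {1..n}"
    have "d i j \<le> Inf (insert 1 {w. walk adj d i j w})"
    proof (rule cInf_greatest)
      show "insert 1 {w. walk adj d i j w} \<noteq> {}" by simp
      fix x assume x: "x \<in> insert 1 {w. walk adj d i j w}"
      show "d i j \<le> x"
      proof (cases "x = 1")
        case True
        then show ?thesis using f V unfolding feasible_sparse_def is_var_def by (cases "i = j") auto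
      next
        case False
        then show ?thesis using x walk_bound[OF g f] by auto
      qed
    qed
    then show "d i j \<le> D i j" using V by (simp add: D_def Dc_def cl_def)
  qed
  have eq: "\<forall>i j. adj i j \<longrightarrow> D i j = d i j"
  proof (intro allI impI)
    fix i j assume a: "adj i j"
    have V: "i \<in> {1..n}" "j \<in> {1..n}" using g a unfolding simple_graph_def by metis+
    have "walk adj d i j (d i j + 0)" by (rule walk.wcons[OF a walk.wnil[of adj d j]])
    then have "cl adj d i j \<le> d i j" using cl_le_walk[OF nn] by simp
    moreover have "d i j \<le> D i j" using ge V by blast
    ultimately show "D i j = d i j" using V by (simp add: D_def Dc_def)
  qed
  show ?thesis using pm_feas[OF pm var le1] pm var eq ge by blast
qed


lemma deg_pos:
  assumes g: "simple_graph n adj" and iso: "\<forall>i\<in>{1..n}. \<exists>j. adj i j" and i: "i \<in> {1..n}"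
  shows "0 < deg n adj i"
proof -
  obtain j where a: "adj i j" using iso i by blast
  have "j \<in> nbrs n adj i" using g a unfolding simple_graph_def nbrs_def by blast
  moreover have "finite (nbrs n adj i)" unfolding nbrs_def by simp
  ultimately have "card (nbrs n adj i) > 0" by (auto simp: card_gt_0_iff)
  then show ?thesis by (simp add: deg_def)
qed

lemma obj_diff:
  "obj_sparse n adj D - obj_sparse n adj d =
   - (1 / (2 * real (num_edges n adj))) * (\<Sum>i\<in>{1..n}. \<Sum>j\<in>{1..n}. Bmat n adj i j * (D i j - d i j))"
  unfolding obj_sparse_def by (simp add: right_diff_distrib sum_subtractf)

lemma obj_cmp:
  assumes g: "simple_graph n adj" and iso: "\<forall>i\<in>{1..n}. \<exists>j. adj i j" and m: "num_edges n adj \<ge> 1"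
    and vd: "is_var n d" and vD: "is_var n D" and eq: "\<forall>i j. adj i j \<longrightarrow> D i j = d i j"
    and ge: "\<forall>i\<in>{1..n}. \<forall>j\<in>{1..n}. d i j \<le> D i j"
  shows "obj_sparse n adj d \<le> obj_sparse n adj D \<and> (obj_sparse n adj d = obj_sparse n adj D \<longrightarrow> D = d)"
proof -
  define t where "t i j = Bmat n adj i j * (D i j - d i j)" for i j
  have mpos: "0 < 2 * real (num_edges n adj)" using m by simp
  have Bneg: "Bmat n adj i j < 0" if "i \<in> {1..n}" "j \<in> {1..n}" "\<not> adj i j" for i j
  proof -
    have "0 < deg n adj i * deg n adj j" using deg_pos[OF g iso] that by simp
    then have "0 < deg n adj i * deg n adj j / (2 * real (num_edges n adj))" using mpos by simp
    then show ?thesis using that by (simp add: Bmat_def Amat_def)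
  qed
  have diag: "D i i = d i i" for i using vd vD by (simp add: is_var_def)
  have tnp: "t i j \<le> 0" if "i \<in> {1..n}" "j \<in> {1..n}" for i j
  proof (cases "adj i j \<or> i = j")
    case True then show ?thesis using eq diag by (auto simp: t_def)
  next
    case False
    then show ?thesis using Bneg[of i j] that ge unfolding t_def
      by (simp add: mult_nonpos_nonneg mult_le_0_iff)
  qed
  have inner: "(\<Sum>j\<in>{1..n}. t i j) \<le> 0" if "i \<in> {1..n}" for i
    by (rule sum_nonpos) (use tnp that in auto)
  have T: "(\<Sum>i\<in>{1..n}. \<Sum>j\<in>{1..n}. t i j) \<le> 0"
    by (rule sum_nonpos) (use inner in auto)
  have dif: "obj_sparse n adj D - obj_sparse n adj d = - (1 / (2 * real (num_edges n adj))) * (\<Sum>i\<in>{1..n}. \<Sum>j\<in>{1..n}. t i j)"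
    unfolding t_def by (rule obj_diff)
  have "0 \<le> - (1 / (2 * real (num_edges n adj))) * (\<Sum>i\<in>{1..n}. \<Sum>j\<in>{1..n}. t i j)"
    using T mpos by (simp add: divide_nonpos_pos)
  then have le: "obj_sparse n adj d \<le> obj_sparse n adj D" using dif by simp
  have "D = d" if e: "obj_sparse n adj d = obj_sparse n adj D"
  proof -
    have "(\<Sum>i\<in>{1..n}. \<Sum>j\<in>{1..n}. t i j) = 0" using dif e mpos by simp
    then have "(\<Sum>i\<in>{1..n}. - (\<Sum>j\<in>{1..n}. t i j)) = 0" by (simp add: sum_negf)
    then have "\<forall>i\<in>{1..n}. - (\<Sum>j\<in>{1..n}. t i j) = 0"
      using inner by (subst (asm) sum_nonneg_eq_0_iff) auto
    then have "\<forall>i\<in>{1..n}. (\<Sum>j\<in>{1..n}. - t i j) = 0" by (simp add: sum_negf)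
    then have t0: "\<forall>i\<in>{1..n}. \<forall>j\<in>{1..n}. - t i j = 0"
    proof (intro ballI)
      fix i j assume i: "i \<in> {1..n}" and j: "j \<in> {1..n}" and
        s: "\<forall>i\<in>{1..n}. (\<Sum>j\<in>{1..n}. - t i j) = 0"
      have "(\<Sum>j\<in>{1..n}. - t i j) = 0" using s i by blast
      then have "\<forall>j\<in>{1..n}. - t i j = 0"
        by (subst (asm) sum_nonneg_eq_0_iff) (use tnp i in auto)
      then show "- t i j = 0" using j by blast
    qed
    show "D = d"
    proof (intro ext)
      fix i j
      show "D i j = d i j"
      proof (cases "i \<in> {1..n} \<and> j \<in> {1..n}")
        case False then show ?thesis using vd vD by (auto simp: is_var_def)
      next
        case True
        show ?thesis
        proof (cases "adj i j")
          case True then show ?thesis using eq by blast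
        next
          case False
          then have "Bmat n adj i j \<noteq> 0" using Bneg \<open>i \<in> {1..n} \<and> j \<in> {1..n}\<close> by force
          moreover have "t i j = 0" using t0 True by auto
          ultimately show ?thesis by (simp add: t_def)
        qed
      qed
    qed
  qed
  then show ?thesis using le by blast
qed

lemma sum_deg:
  assumes g: "simple_graph n adj"
  shows "(\<Sum>i\<in>{1..n}. deg n adj i) = 2 * real (num_edges n adj)"
proof -
  define P where "P = Sigma {1..n} (nbrs n adj)"
  define U where "U = {(i, j). i \<in> {1..n} \<and> j \<in> {1..n} \<and> i < j \<and> adj i j}"
  have fin: "finite P" unfolding P_def nbrs_def by (intro finite_SigmaI) auto
  have cP: "card P = (\<Sum>i\<in>{1..n}. card (nbrs n adj i))"
    unfolding P_def by (rule card_SigmaI) (auto simp: nbrs_def)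
  have PU: "P = U \<union> prod.swap ` U"
  proof
    show "P \<subseteq> U \<union> prod.swap ` U"
    proof
      fix x assume "x \<in> P"
      then obtain i j where x: "x = (i,j)" "i \<in> {1..n}" "j \<in> {1..n}" "adj i j"
        unfolding P_def nbrs_def by auto
      have "i \<noteq> j" using g x unfolding simple_graph_def by metis
      then consider "i < j" | "j < i" by linarith
      then show "x \<in> U \<union> prod.swap ` U"
      proof cases
        case 1 then show ?thesis using x unfolding U_def by auto
      next
        case 2
        have "(j, i) \<in> U" using 2 x g unfolding U_def simple_graph_def by auto
        then have "prod.swap (j,i) \<in> prod.swap ` U" by blast
        then show ?thesis using x by simp
      qed
    qed
  next
    show "U \<union> prod.swap ` U \<subseteq> P"
      using g unfolding U_def P_def nbrs_def simple_graph_def by auto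
  qed
  have disj: "U \<inter> prod.swap ` U = {}" unfolding U_def by auto
  have finU: "finite U" using fin PU by simp
  have "card P = card U + card (prod.swap ` U)"
    unfolding PU using finU disj by (intro card_Un_disjoint) auto
  also have "card (prod.swap ` U) = card U" by (rule card_image) (force simp: inj_on_def)
  finally have "card P = 2 * card U" by simp
  moreover have "card U = num_edges n adj" unfolding U_def num_edges_def by simp
  ultimately have "(\<Sum>i\<in>{1..n}. card (nbrs n adj i)) = 2 * num_edges n adj" using cP by simp
  then have "real (\<Sum>i\<in>{1..n}. card (nbrs n adj i)) = 2 * real (num_edges n adj)"
    by (metis of_nat_mult of_nat_numeral)
  then show ?thesis unfolding deg_def by simp
qed

lemma sumB:
  assumes g: "simple_graph n adj" and m: "num_edges n adj \<ge> 1"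
  shows "(\<Sum>i\<in>{1..n}. \<Sum>j\<in>{1..n}. Bmat n adj i j) = 0"
proof -
  define S where "S = (\<Sum>i\<in>{1..n}. deg n adj i)"
  have S: "S = 2 * real (num_edges n adj)" using sum_deg[OF g] S_def by simp
  have A: "(\<Sum>j\<in>{1..n}. Amat adj i j) = deg n adj i" for i
  proof -
    have "(\<Sum>j\<in>{1..n}. Amat adj i j) = (\<Sum>j\<in>nbrs n adj i. 1)"
      unfolding Amat_def nbrs_def by (simp add: sum.If_cases Int_def conj_commute)
    then show ?thesis by (simp add: deg_def)
  qed
  have "(\<Sum>i\<in>{1..n}. \<Sum>j\<in>{1..n}. Bmat n adj i j) =
     (\<Sum>i\<in>{1..n}. deg n adj i) - (\<Sum>i\<in>{1..n}. \<Sum>j\<in>{1..n}. deg n adj i * deg n adj j) / (2 * real (num_edges n adj))"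
  proof -
    have "(\<Sum>i\<in>{1..n}. \<Sum>j\<in>{1..n}. Bmat n adj i j) = (\<Sum>i\<in>{1..n}. (\<Sum>j\<in>{1..n}. Amat adj i j) - (\<Sum>j\<in>{1..n}. deg n adj i * deg n adj j) / (2 * real (num_edges n adj)))"
      unfolding Bmat_def by (simp add: sum_subtractf sum_divide_distrib)
    also have "\<dots> = (\<Sum>i\<in>{1..n}. deg n adj i - (\<Sum>j\<in>{1..n}. deg n adj i * deg n adj j) / (2 * real (num_edges n adj)))"
      using A by presburger
    finally show ?thesis by (simp add: sum_subtractf sum_divide_distrib)
  qed
  also have "(\<Sum>i\<in>{1..n}. \<Sum>j\<in>{1..n}. deg n adj i * deg n adj j) = S * S"
    unfolding S_def by (simp add: sum_product)
  finally show ?thesis using S m S_def by simp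
qed

lemma obj_eq:
  assumes g: "simple_graph n adj" and m: "num_edges n adj \<ge> 1"
  shows "obj_complete n adj d = obj_sparse n adj d"
proof -
  have "obj_complete n adj d = (1 / (2 * real (num_edges n adj))) *
     ((\<Sum>i\<in>{1..n}. \<Sum>j\<in>{1..n}. Bmat n adj i j) - (\<Sum>i\<in>{1..n}. \<Sum>j\<in>{1..n}. Bmat n adj i j * d i j))"
    unfolding obj_complete_def by (simp add: right_diff_distrib sum_subtractf)
  then show ?thesis using sumB[OF g m] by (simp add: obj_sparse_def)
qed


lemma cont_ij [continuous_intros]: "continuous_on S (\<lambda>d::nat\<Rightarrow>nat\<Rightarrow>real. d i j)"
proof -
  have "continuous_on UNIV (\<lambda>d::nat\<Rightarrow>nat\<Rightarrow>real. d i j)"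
    by (rule continuous_on_product_then_coordinatewise[OF continuous_on_product_coordinates])
  then show ?thesis by (rule continuous_on_subset) simp
qed

lemma closed_imp_const: "closed {x. Q x} \<Longrightarrow> closed {x. P \<longrightarrow> Q x}"
  by (cases P) auto

lemma closed_ball_const: "(\<And>i. i \<in> A \<Longrightarrow> closed {x. Q i x}) \<Longrightarrow> closed {x. \<forall>i\<in>A. Q i x}"
proof -
  assume a: "\<And>i. i \<in> A \<Longrightarrow> closed {x. Q i x}"
  have "{x. \<forall>i\<in>A. Q i x} = (\<Inter>i\<in>A. {x. Q i x})" by auto
  then show ?thesis using a by (simp add: closed_INT)
qed

lemma compact_K: "compact {d::nat\<Rightarrow>nat\<Rightarrow>real. \<forall>i j. d i j \<in> {0..1}}"
proof -
  have inner: "compact (PiE UNIV (\<lambda>_::nat. {0..1::real}))"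
  proof -
    have "compactin (product_topology (\<lambda>_::nat. euclidean) UNIV) (PiE UNIV (\<lambda>_::nat. {0..1::real}))"
      by (subst compactin_PiE) auto
    then show ?thesis by (simp add: euclidean_product_topology)
  qed
  have "compactin (product_topology (\<lambda>_::nat. euclidean) UNIV) (PiE UNIV (\<lambda>_::nat. PiE UNIV (\<lambda>_::nat. {0..1::real})))"
    by (subst compactin_PiE) (use inner in auto)
  then have "compact (PiE UNIV (\<lambda>_::nat. PiE UNIV (\<lambda>_::nat. {0..1::real})))"
    by (simp add: euclidean_product_topology)
  moreover have "PiE UNIV (\<lambda>_::nat. PiE UNIV (\<lambda>_::nat. {0..1::real})) = {d::nat\<Rightarrow>nat\<Rightarrow>real. \<forall>i j. d i j \<in> {0..1}}"
    by (auto simp: PiE_UNIV_domain Pi_iff)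
  ultimately show ?thesis by simp
qed

lemma closed_fc: "closed {d. feasible_complete n d}"
  unfolding feasible_complete_def is_var_def
  by (intro closed_Collect_conj closed_Collect_all closed_ball_const closed_imp_const
      closed_Collect_le closed_Collect_eq continuous_intros)

lemma exists_opt:
  assumes g: "simple_graph n adj" and m: "num_edges n adj \<ge> 1"
  shows "\<exists>d. optimal_complete n adj d"
proof -
  define F where "F = {d. feasible_complete n d}"
  define K where "K = {d::nat\<Rightarrow>nat\<Rightarrow>real. \<forall>i j. d i j \<in> {0..1}}"
  have sub: "F \<subseteq> K"
  proof
    fix d assume "d \<in> F"
    then have f: "feasible_complete n d" by (simp add: F_def)
    have "d i j \<in> {0..1}" for i j
      using f unfolding feasible_complete_def is_var_def
      by (cases "i \<in> {1..n} \<and> j \<in> {1..n}"; cases "i = j") auto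
    then show "d \<in> K" by (simp add: K_def)
  qed
  have "compact (K \<inter> F)" using compact_K closed_fc unfolding K_def F_def by (rule compact_Int_closed)
  then have cF: "compact F" using sub by (simp add: Int_absorb1)
  have "(\<lambda>_ _. 0) \<in> F" by (simp add: F_def feasible_complete_def is_var_def)
  then have ne: "F \<noteq> {}" by blast
  have cont: "continuous_on F (obj_complete n adj)"
    unfolding obj_complete_def by (intro continuous_intros)
  obtain x where "x \<in> F" "\<forall>y\<in>F. obj_complete n adj y \<le> obj_complete n adj x"
    using continuous_attains_sup[OF cF ne cont] by blast
  then show ?thesis unfolding optimal_complete_def F_def by auto
qed


theorem theorem2:
  fixes n :: nat and adj :: "nat \<Rightarrow> nat \<Rightarrow> bool"
  assumes "simple_graph n adj"
    and "\<forall>i\<in>{1..n}. \<exists>j. adj i j"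
    and "num_edges n adj \<ge> 1"
  shows "(\<forall>d. optimal_complete n adj d \<longleftrightarrow> optimal_sparse n adj d)
    \<and> (\<forall>d. optimal_sparse n adj d \<longrightarrow>
          feasible_complete n d \<and> pseudo_metric_on {1..n} d \<and>
          (\<forall>i\<in>{1..n}. \<forall>j\<in>{1..n}. 0 \<le> d i j \<and> d i j \<le> 1))
    \<and> (\<exists>d. optimal_complete n adj d)
    \<and> (\<exists>d. optimal_sparse n adj d)
    \<and> (SUP d\<in>{d. feasible_complete n d}. obj_complete n adj d)
        = (SUP d\<in>{d. feasible_sparse n adj d}. obj_sparse n adj d)"
proof -
  note g = assms(1) and iso = assms(2) and m = assms(3)
  have oe: "obj_complete n adj d = obj_sparse n adj d" for d using obj_eq[OF g m] .
  have P2: "feasible_complete n d \<and> pseudo_metric_on {1..n} d \<and>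
          (\<forall>i\<in>{1..n}. \<forall>j\<in>{1..n}. 0 \<le> d i j \<and> d i j \<le> 1)" if o: "optimal_sparse n adj d" for d
  proof -
    have f: "feasible_sparse n adj d" using o by (simp add: optimal_sparse_def)
    define D where "D = Dc n adj d"
    have k: "feasible_complete n D \<and> pseudo_metric_on {1..n} D \<and> is_var n D \<and>
      (\<forall>i j. adj i j \<longrightarrow> D i j = d i j) \<and> (\<forall>i\<in>{1..n}. \<forall>j\<in>{1..n}. d i j \<le> D i j)"
      unfolding D_def by (rule key_closure[OF g f])
    have vd: "is_var n d" using f by (simp add: feasible_sparse_def)
    have c: "obj_sparse n adj d \<le> obj_sparse n adj D \<and> (obj_sparse n adj d = obj_sparse n adj D \<longrightarrow> D = d)"
      using obj_cmp[OF g iso m vd] k by blast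
    have "obj_sparse n adj D \<le> obj_sparse n adj d"
      using o fc_fs[of n D adj] k unfolding optimal_sparse_def by blast
    then have "D = d" using c by linarith
    then have fc: "feasible_complete n d" and pm: "pseudo_metric_on {1..n} d" using k by auto
    have "\<forall>i\<in>{1..n}. \<forall>j\<in>{1..n}. 0 \<le> d i j \<and> d i j \<le> 1"
      using fc unfolding feasible_complete_def is_var_def
      by (metis order_refl zero_less_one less_imp_le)
    then show ?thesis using fc pm by blast
  qed
  have P1: "optimal_complete n adj d \<longleftrightarrow> optimal_sparse n adj d" for d
  proof
    assume o: "optimal_complete n adj d"
    have fc: "feasible_complete n d" using o by (simp add: optimal_complete_def)
    show "optimal_sparse n adj d" unfolding optimal_sparse_def
    proof (intro conjI allI impI)
      show "feasible_sparse n adj d" by (rule fc_fs[OF fc])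
      fix d' assume f': "feasible_sparse n adj d'"
      define D where "D = Dc n adj d'"
      have k: "feasible_complete n D \<and> pseudo_metric_on {1..n} D \<and> is_var n D \<and>
        (\<forall>i j. adj i j \<longrightarrow> D i j = d' i j) \<and> (\<forall>i\<in>{1..n}. \<forall>j\<in>{1..n}. d' i j \<le> D i j)"
        unfolding D_def by (rule key_closure[OF g f'])
      have vd: "is_var n d'" using f' by (simp add: feasible_sparse_def)
      have "obj_sparse n adj d' \<le> obj_sparse n adj D"
        using obj_cmp[OF g iso m vd] k by blast
      moreover have "obj_complete n adj D \<le> obj_complete n adj d"
        using o k unfolding optimal_complete_def by blast
      ultimately show "obj_sparse n adj d' \<le> obj_sparse n adj d" using oe by simp
    qed
  next
    assume o: "optimal_sparse n adj d"
    have fc: "feasible_complete n d" using P2[OF o] by blast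
    show "optimal_complete n adj d" unfolding optimal_complete_def
      using fc o fc_fs[of n _ adj] oe unfolding optimal_sparse_def by metis
  qed
  obtain ds where ds: "optimal_complete n adj ds" using exists_opt[OF g m] by blast
  have ds': "optimal_sparse n adj ds" using P1 ds by blast
  have S1: "(SUP d\<in>{d. feasible_complete n d}. obj_complete n adj d) = obj_complete n adj ds"
    using ds unfolding optimal_complete_def by (intro cSup_eq_maximum) auto
  have S2: "(SUP d\<in>{d. feasible_sparse n adj d}. obj_sparse n adj d) = obj_sparse n adj ds"
    using ds' unfolding optimal_sparse_def by (intro cSup_eq_maximum) auto
  show ?thesis using P1 P2 ds ds' S1 S2 oe by metis
qed

end
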